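(* Let $r$ be even, $n=r+2$, and let $a,h_1,h_2:\mathbb F_2^r\to\mathbb F_2$. Define $\mathfrak f:\mathbb F_2^r\times\mathbb F_2^2\to\mathbb F_2$ by $\mathfrak f(x,y)=a(x)\oplus(h_1(x)\oplus y_1)(h_2(x)\oplus y_2)$. Suppose that any one of the following holds: (1) $a$ is bent, $h_1=h_2=g$ for some $g$, and $a\oplus g$ is semi-bent; (2) $a$ is bent, $h_1$ is affine, and $a\oplus h_2$ is semi-bent; (3) $W_a(u)\in\{0,\pm2^{r/2},\pm2^{(r+2)/2}\}$ for all $u$, and $h_1,h_2$ are affine; (4) $W_a(u)\in\{0,\pm2^{r/2},\pm2^{(r+2)/2}\}$ for all $u$, $h_1$ is affine, and $a\oplus h_2$ is bent or semi-bent. Then $W_{\mathfrak f}(u,v)\in\{0,\pm2^{n/2},\pm2^{(n+2)/2}\}$ for all $(u,v)\in\mathbb F_2^r\times\mathbb F_2^2$.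
   Context: $W_f(\omega)=\sum_x(-1)^{f(x)\oplus\omega\cdot x}$. For even $r$, $a:\mathbb F_2^r\to\mathbb F_2$ is bent if $|W_a(u)|=2^{r/2}$ for all $u$, and semi-bent if $W_a(u)\in\{0,\pm2^{(r+2)/2}\}$ for all $u$. Affine functions are $x\mapsto c\cdot x\oplus d$. *)

theory Defs
  imports Main
begin

text \<open>Vectors of F_2^r are modelled as functions nat => bool vanishing outside {..<r}.\<close>
definition vecs :: "nat \<Rightarrow> (nat \<Rightarrow> bool) set" where
  "vecs r = {x. \<forall>i. r \<le> i \<longrightarrow> \<not> x i}"

text \<open>Inner product u . x in F_2 (True = 1).\<close>
definition dot :: "nat \<Rightarrow> (nat \<Rightarrow> bool) \<Rightarrow> (nat \<Rightarrow> bool) \<Rightarrow> bool" where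
  "dot r u x = odd (card {i \<in> {..<r}. u i \<and> x i})"

definition walsh :: "nat \<Rightarrow> ((nat \<Rightarrow> bool) \<Rightarrow> bool) \<Rightarrow> (nat \<Rightarrow> bool) \<Rightarrow> int" where
  "walsh r f w = (\<Sum>x\<in>vecs r. if f x \<noteq> dot r w x then -1 else 1)"

definition walsh2 :: "nat \<Rightarrow> ((nat \<Rightarrow> bool) \<Rightarrow> (nat \<Rightarrow> bool) \<Rightarrow> bool)
    \<Rightarrow> (nat \<Rightarrow> bool) \<Rightarrow> (nat \<Rightarrow> bool) \<Rightarrow> int" where
  "walsh2 r f u v = (\<Sum>x\<in>vecs r. \<Sum>y\<in>vecs 2.
      if f x y \<noteq> (dot r u x \<noteq> dot 2 v y) then -1 else 1)"

definition bent :: "nat \<Rightarrow> ((nat \<Rightarrow> bool) \<Rightarrow> bool) \<Rightarrow> bool" where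
  "bent r a = (\<forall>u\<in>vecs r. \<bar>walsh r a u\<bar> = 2 ^ (r div 2))"

definition semi_bent :: "nat \<Rightarrow> ((nat \<Rightarrow> bool) \<Rightarrow> bool) \<Rightarrow> bool" where
  "semi_bent r a = (\<forall>u\<in>vecs r. walsh r a u \<in> {0, 2 ^ ((r + 2) div 2), - (2 ^ ((r + 2) div 2))})"

definition affine_fn :: "nat \<Rightarrow> ((nat \<Rightarrow> bool) \<Rightarrow> bool) \<Rightarrow> bool" where
  "affine_fn r h = (\<exists>c\<in>vecs r. \<exists>d. \<forall>x\<in>vecs r. h x = (dot r c x \<noteq> d))"

definition plateau3 :: "nat \<Rightarrow> ((nat \<Rightarrow> bool) \<Rightarrow> bool) \<Rightarrow> bool" where
  "plateau3 r a = (\<forall>u\<in>vecs r. walsh r a u \<in>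
     {0, 2 ^ (r div 2), - (2 ^ (r div 2)), 2 ^ ((r + 2) div 2), - (2 ^ ((r + 2) div 2))})"

text \<open>frak f (x,y) = a(x) xor (h1(x) xor y_1)(h2(x) xor y_2); y_1 = y 0, y_2 = y 1.\<close>
definition frakf :: "((nat \<Rightarrow> bool) \<Rightarrow> bool) \<Rightarrow> ((nat \<Rightarrow> bool) \<Rightarrow> bool) \<Rightarrow> ((nat \<Rightarrow> bool) \<Rightarrow> bool)
    \<Rightarrow> (nat \<Rightarrow> bool) \<Rightarrow> (nat \<Rightarrow> bool) \<Rightarrow> bool" where
  "frakf a h1 h2 x y = (a x \<noteq> ((h1 x \<noteq> y 0) \<and> (h2 x \<noteq> y 1)))"

end

theory Submission
  imports Defs
begin

definition mk2 :: "bool \<Rightarrow> bool \<Rightarrow> nat \<Rightarrow> bool" where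
  "mk2 p q = (\<lambda>i. if i = 0 then p else if i = 1 then q else False)"

lemma mk2_0: "mk2 p q 0 = p" by (simp add: mk2_def)
lemma mk2_1: "mk2 p q 1 = q" by (simp add: mk2_def)

lemma vecs2: "vecs 2 = case_prod mk2 ` {(False,False),(False,True),(True,False),(True,True)}"
proof
  show "vecs 2 \<subseteq> case_prod mk2 ` {(False,False),(False,True),(True,False),(True,True)}"
  proof
    fix y assume y: "y \<in> vecs 2"
    have "y = mk2 (y 0) (y 1)" unfolding mk2_def
    proof
      fix i show "y i = (if i = 0 then y 0 else if i = 1 then y 1 else False)"
        using y unfolding vecs_def by (cases "i < 2") (auto simp: less_2_cases_iff)
    qed
    thus "y \<in> case_prod mk2 ` {(False,False),(False,True),(True,False),(True,True)}"
      by (cases "y 0"; cases "y 1") auto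
  qed
next
  show "case_prod mk2 ` {(False,False),(False,True),(True,False),(True,True)} \<subseteq> vecs 2"
    by (auto simp: vecs_def mk2_def)
qed

lemma inj_mk2: "inj_on (case_prod mk2) A"
proof (rule inj_onI, clarify)
  fix p q p' q' assume "mk2 p q = mk2 p' q'"
  hence "mk2 p q 0 = mk2 p' q' 0" "mk2 p q 1 = mk2 p' q' 1" by auto
  thus "p = p' \<and> q = q'" by (simp add: mk2_def)
qed

lemma sum_vecs2: "(\<Sum>y\<in>vecs 2. F y) = F (mk2 False False) + F (mk2 False True) + F (mk2 True False) + F (mk2 True True)"
  unfolding vecs2 by (subst sum.reindex[OF inj_mk2]) (simp add: add.assoc)

lemma dot2_set: "{i \<in> {..<2::nat}. v i \<and> y i} = (if v 0 \<and> y 0 then {0} else {}) \<union> (if v 1 \<and> y 1 then {1} else {})"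
  by (rule set_eqI) (case_tac "x = 0"; case_tac "x = 1"; auto)
lemma dot2: "dot 2 v y = ((v 0 \<and> y 0) \<noteq> (v 1 \<and> y 1))"
  unfolding dot_def dot2_set
  by (cases "v 0 \<and> y 0"; cases "v 1 \<and> y 1") auto

lemma y4:
  fixes A B C V0 V1 D :: bool
  defines "F \<equiv> \<lambda>p q. if (A \<noteq> ((B \<noteq> p) \<and> (C \<noteq> q))) \<noteq> (D \<noteq> ((V0 \<and> p) \<noteq> (V1 \<and> q))) then - 1 else (1::int)"
  shows "F False False + F False True + F True False + F True True =
    (if V0 \<and> V1 then - 2 else 2) * (if ((A \<noteq> (V0 \<and> B)) \<noteq> (V1 \<and> C)) \<noteq> D then - 1 else 1)"
  unfolding F_def
  by (cases A; cases B; cases C; cases V0; cases V1; cases D) simp_all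

lemma walsh2_red:
  "walsh2 r (frakf a h1 h2) u v = (if v 0 \<and> v 1 then -2 else 2) *
     walsh r (\<lambda>x. (a x \<noteq> (v 0 \<and> h1 x)) \<noteq> (v 1 \<and> h2 x)) u"
  unfolding walsh2_def walsh_def sum_distrib_left
  apply (rule sum.cong[OF refl])
  apply (simp only: sum_vecs2 dot2 frakf_def mk2_0 mk2_1)
  apply (rule y4)
  done

definition S :: "nat \<Rightarrow> int set" where
  "S r = {0, 2 ^ (r div 2), - (2 ^ (r div 2)), 2 ^ ((r + 2) div 2), - (2 ^ ((r + 2) div 2))}"

definition plat :: "nat \<Rightarrow> ((nat \<Rightarrow> bool) \<Rightarrow> bool) \<Rightarrow> bool" where
  "plat r b = (\<forall>u\<in>vecs r. walsh r b u \<in> S r)"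

lemma bent_plat: "bent r a \<Longrightarrow> plat r a"
  unfolding bent_def plat_def
proof (intro ballI)
  fix u assume "\<forall>u\<in>vecs r. \<bar>walsh r a u\<bar> = 2 ^ (r div 2)" "u \<in> vecs r"
  hence "\<bar>walsh r a u\<bar> = 2 ^ (r div 2)" by blast
  hence "walsh r a u = 2 ^ (r div 2) \<or> walsh r a u = - (2 ^ (r div 2))" by arith
  thus "walsh r a u \<in> S r" unfolding S_def by blast
qed

lemma semi_plat: "semi_bent r a \<Longrightarrow> plat r a"
  unfolding semi_bent_def plat_def S_def by auto

lemma p3_plat: "plateau3 r a \<Longrightarrow> plat r a"
  unfolding plateau3_def plat_def S_def by auto

lemma walsh_cong: "(\<And>x. x \<in> vecs r \<Longrightarrow> f x = g x) \<Longrightarrow> walsh r f u = walsh r g u"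
  unfolding walsh_def by (rule sum.cong) auto

lemma plat_cong: "(\<And>x. x \<in> vecs r \<Longrightarrow> f x = g x) \<Longrightarrow> plat r f = plat r g"
  unfolding plat_def by (simp add: walsh_cong[of r f g])

lemma par_aux: "(a::nat) + b = d + 2 * m \<Longrightarrow> odd d = (odd a \<noteq> odd b)" by presburger

lemma dot_xor: "dot r (\<lambda>i. u i \<noteq> c i) x = (dot r u x \<noteq> dot r c x)"
proof -
  let ?A = "{i \<in> {..<r}. u i \<and> x i}" and ?B = "{i \<in> {..<r}. c i \<and> x i}"
  let ?D = "{i \<in> {..<r}. (u i \<noteq> c i) \<and> x i}"
  have fA: "finite ?A" "finite ?B" "finite ?D" by auto
  have "?A \<union> ?B = ?D \<union> (?A \<inter> ?B)" "?D \<inter> (?A \<inter> ?B) = {}" by auto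
  hence "card (?A \<union> ?B) = card ?D + card (?A \<inter> ?B)"
    using card_Un_disjoint[of ?D "?A \<inter> ?B"] fA by simp
  moreover have "card ?A + card ?B = card (?A \<union> ?B) + card (?A \<inter> ?B)"
    using card_Un_Int[OF fA(1) fA(2)] by simp
  ultimately have "card ?A + card ?B = card ?D + 2 * card (?A \<inter> ?B)" by simp
  thus ?thesis unfolding dot_def using par_aux by blast
qed

lemma plat_affine:
  assumes "plat r b" "affine_fn r h"
  shows "plat r (\<lambda>x. b x \<noteq> h x)"
proof -
  obtain c d where c: "c \<in> vecs r" and h: "\<And>x. x \<in> vecs r \<Longrightarrow> h x = (dot r c x \<noteq> d)"
    using assms(2) unfolding affine_fn_def by blast
  show ?thesis unfolding plat_def
  proof
    fix u assume u: "u \<in> vecs r"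
    let ?w = "\<lambda>i. u i \<noteq> c i"
    have w: "?w \<in> vecs r" using u c unfolding vecs_def by auto
    have "walsh r (\<lambda>x. b x \<noteq> h x) u = (if d then -1 else 1) * walsh r b ?w"
      unfolding walsh_def sum_distrib_left
    proof (rule sum.cong[OF refl])
      fix x assume "x \<in> vecs r"
      thus "(if (b x \<noteq> h x) \<noteq> dot r u x then - 1 else 1) =
         (if d then - 1 else 1) * (if b x \<noteq> dot r ?w x then - 1 else (1::int))"
        using h[of x] unfolding dot_xor by auto
    qed
    moreover have "walsh r b ?w \<in> S r" using assms(1) w unfolding plat_def by auto
    ultimately show "walsh r (\<lambda>x. b x \<noteq> h x) u \<in> S r" unfolding S_def by auto
  qed
qed

theorem mainTheorem6:
  fixes r n :: nat and a h1 h2 :: "(nat \<Rightarrow> bool) \<Rightarrow> bool"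
  assumes "even r" and "n = r + 2"
    and "(bent r a \<and> (\<exists>g. (\<forall>x\<in>vecs r. h1 x = g x \<and> h2 x = g x) \<and> semi_bent r (\<lambda>x. a x \<noteq> g x)))
       \<or> (bent r a \<and> affine_fn r h1 \<and> semi_bent r (\<lambda>x. a x \<noteq> h2 x))
       \<or> (plateau3 r a \<and> affine_fn r h1 \<and> affine_fn r h2)
       \<or> (plateau3 r a \<and> affine_fn r h1 \<and> (bent r (\<lambda>x. a x \<noteq> h2 x) \<or> semi_bent r (\<lambda>x. a x \<noteq> h2 x)))"
  shows "\<forall>u\<in>vecs r. \<forall>v\<in>vecs 2. walsh2 r (frakf a h1 h2) u v \<in>
     {0, 2 ^ (n div 2), - (2 ^ (n div 2)), 2 ^ ((n + 2) div 2), - (2 ^ ((n + 2) div 2))}"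
proof (intro ballI)
  fix u v assume u: "u \<in> vecs r" and v: "v \<in> vecs 2"
  have all: "plat r a \<and> plat r (\<lambda>x. a x \<noteq> h1 x) \<and> plat r (\<lambda>x. a x \<noteq> h2 x)
     \<and> plat r (\<lambda>x. (a x \<noteq> h1 x) \<noteq> h2 x)"
    using assms(3)
  proof (elim disjE conjE exE)
    fix g assume b: "bent r a" and g: "\<forall>x\<in>vecs r. h1 x = g x \<and> h2 x = g x"
      and s: "semi_bent r (\<lambda>x. a x \<noteq> g x)"
    have "plat r (\<lambda>x. a x \<noteq> h1 x) = plat r (\<lambda>x. a x \<noteq> g x)"
      "plat r (\<lambda>x. a x \<noteq> h2 x) = plat r (\<lambda>x. a x \<noteq> g x)"
      "plat r (\<lambda>x. (a x \<noteq> h1 x) \<noteq> h2 x) = plat r a"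
      by (rule plat_cong; use g in auto)+
    thus ?thesis using bent_plat[OF b] semi_plat[OF s] by simp
  next
    assume b: "bent r a" and h1: "affine_fn r h1" and s: "semi_bent r (\<lambda>x. a x \<noteq> h2 x)"
    have "plat r (\<lambda>x. (a x \<noteq> h2 x) \<noteq> h1 x)" using plat_affine[OF semi_plat[OF s] h1] .
    moreover have "plat r (\<lambda>x. (a x \<noteq> h1 x) \<noteq> h2 x) = plat r (\<lambda>x. (a x \<noteq> h2 x) \<noteq> h1 x)"
      by (rule plat_cong) auto
    ultimately show ?thesis using bent_plat[OF b] semi_plat[OF s] plat_affine[OF bent_plat[OF b] h1] by simp
  next
    assume b: "plateau3 r a" and h1: "affine_fn r h1" and h2: "affine_fn r h2"
    show ?thesis using p3_plat[OF b] plat_affine[OF p3_plat[OF b] h1] plat_affine[OF p3_plat[OF b] h2]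
      plat_affine[OF plat_affine[OF p3_plat[OF b] h1] h2] by simp
  next
    assume b: "plateau3 r a" and h1: "affine_fn r h1" and s: "bent r (\<lambda>x. a x \<noteq> h2 x)"
    have "plat r (\<lambda>x. (a x \<noteq> h2 x) \<noteq> h1 x)" using plat_affine[OF bent_plat[OF s] h1] .
    moreover have "plat r (\<lambda>x. (a x \<noteq> h1 x) \<noteq> h2 x) = plat r (\<lambda>x. (a x \<noteq> h2 x) \<noteq> h1 x)"
      by (rule plat_cong) auto
    ultimately show ?thesis using p3_plat[OF b] bent_plat[OF s] plat_affine[OF p3_plat[OF b] h1] by simp
  next
    assume b: "plateau3 r a" and h1: "affine_fn r h1" and s: "semi_bent r (\<lambda>x. a x \<noteq> h2 x)"
    have "plat r (\<lambda>x. (a x \<noteq> h2 x) \<noteq> h1 x)" using plat_affine[OF semi_plat[OF s] h1] .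
    moreover have "plat r (\<lambda>x. (a x \<noteq> h1 x) \<noteq> h2 x) = plat r (\<lambda>x. (a x \<noteq> h2 x) \<noteq> h1 x)"
      by (rule plat_cong) auto
    ultimately show ?thesis using p3_plat[OF b] semi_plat[OF s] plat_affine[OF p3_plat[OF b] h1] by simp
  qed
  have "plat r (\<lambda>x. (a x \<noteq> (v 0 \<and> h1 x)) \<noteq> (v 1 \<and> h2 x))"
    using all by (cases "v 0"; cases "v 1") simp_all
  hence W: "walsh r (\<lambda>x. (a x \<noteq> (v 0 \<and> h1 x)) \<noteq> (v 1 \<and> h2 x)) u \<in> S r"
    using u unfolding plat_def by blast
  have e1: "n div 2 = Suc (r div 2)" "(n + 2) div 2 = Suc ((r + 2) div 2)" using assms(2) by auto
  show "walsh2 r (frakf a h1 h2) u v \<in>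
     {0, 2 ^ (n div 2), - (2 ^ (n div 2)), 2 ^ ((n + 2) div 2), - (2 ^ ((n + 2) div 2))}"
    unfolding walsh2_red e1 using W unfolding S_def by auto
qed

end
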